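(* Let $a<b$ be real numbers, let $m \ge 1$, and let $F:\mathbb{R}^m \to \mathbb{R}$ be continuous. Suppose that for every choice of subintervals $I_1,\dots,I_m \subset [a,b]$, all closed of a common positive length, such that any two of them are either identical or disjoint, we have \[ F(I_1,\dots,I_m) = F(\ddot I_1,\dots,\ddot I_m). \] Then $F(C_{a,b}^m) = F([a,b]^m)$.
   Context: For a closed interval $I=[c,c+3t]$ with $t>0$, write $\ddot I = [c,c+t]\cup[c+2t,c+3t]$ (the interval with its open middle third removed). For sets $A_1,\dots,A_m\subset\mathbb{R}$, $F(A_1,\dots,A_m)=\{F(x_1,\dots,x_m): x_i\in A_i\}$, and $F(A^m)=F(A,\dots,A)$. The Cantor set is $C=\{\sum_{k\ge1}\alpha_k3^{-k}:\alpha_k\in\{0,2\}\}$, and $C_{a,b} := a + (b-a)C = \{a+(b-a)x : x\in C\}$. *)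

theory Defs
  imports "HOL-Analysis.Analysis"
begin

text \<open>Middle-third removal: for I = [c, c+3t], ddot I = [c,c+t] \<union> [c+2t,c+3t].\<close>
definition ddot :: "real \<Rightarrow> real \<Rightarrow> real set" where
  "ddot c t = {c..c+t} \<union> {c+2*t..c+3*t}"

text \<open>The Cantor set: sums of alpha_k 3^(-k), k \<ge> 1, alpha_k \<in> {0,2} (index shifted to start at 0).\<close>
definition cantor_set :: "real set" where
  "cantor_set = {(\<Sum>k. \<alpha> k / 3 ^ (k+1)) | \<alpha>. \<forall>k. \<alpha> k \<in> {0,2}}"

definition cantor_ab :: "real \<Rightarrow> real \<Rightarrow> real set" where
  "cantor_ab a b = (\<lambda>x. a + (b - a) * x) ` cantor_set"

end

theory Submission imports Defs begin

lemma geo3: "(\<lambda>k. 2 / 3 ^ (k + n + 1) :: real) sums (1 / 3 ^ n)"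
proof -
  have "(\<lambda>k. (1/3::real) ^ k) sums (3/2)"
    using geometric_sums[of "1/3::real"] by simp
  then have "(\<lambda>k. (2 / 3 ^ (n+1)) * (1/3::real) ^ k) sums ((2 / 3 ^ (n+1)) * (3/2))"
    by (rule sums_mult)
  moreover have "(\<lambda>k. (2 / 3 ^ (n+1)) * (1/3::real) ^ k) = (\<lambda>k. 2 / 3 ^ (k + n + 1))"
    by (rule ext) (simp add: power_add power_one_over field_simps)
  moreover have "(2 / 3 ^ (n+1)) * (3/2) = (1 / 3 ^ n :: real)" by simp
  ultimately show ?thesis by simp
qed

lemma digits_tail:
  fixes \<alpha> :: "nat \<Rightarrow> real"
  assumes "\<forall>k. \<alpha> k \<in> {0,2}"
  shows "summable (\<lambda>k. \<alpha> (k+n) / 3^(k+n+1))"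
    and "0 \<le> (\<Sum>k. \<alpha> (k+n) / 3^(k+n+1))"
    and "(\<Sum>k. \<alpha> (k+n) / 3^(k+n+1)) \<le> 1 / 3^n"
proof -
  have b: "norm (\<alpha> (k+n) / 3^(k+n+1)) \<le> 2 / 3 ^ (k + n + 1)" for k
    using assms[rule_format, of "k+n"] by auto
  show s: "summable (\<lambda>k. \<alpha> (k+n) / 3^(k+n+1))"
    by (rule summable_comparison_test[OF _ sums_summable[OF geo3]]) (use b in auto)
  show "0 \<le> (\<Sum>k. \<alpha> (k+n) / 3^(k+n+1))"
  proof (rule suminf_nonneg[OF s])
    fix k have "0 \<le> \<alpha> (k+n)" using assms[rule_format, of "k+n"] by auto
    then show "0 \<le> \<alpha> (k+n) / 3^(k+n+1)" by simp
  qed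
  have "(\<Sum>k. \<alpha> (k+n) / 3^(k+n+1)) \<le> (\<Sum>k. 2 / 3 ^ (k + n + 1))"
  proof (rule suminf_le[OF _ s sums_summable[OF geo3]])
    fix k show "\<alpha> (k+n) / 3^(k+n+1) \<le> 2 / 3 ^ (k + n + 1)"
      using assms[rule_format, of "k+n"] by (auto simp: divide_right_mono)
  qed
  also have "\<dots> = 1/3^n" using geo3 sums_unique by metis
  finally show "(\<Sum>k. \<alpha> (k+n) / 3^(k+n+1)) \<le> 1 / 3^n" .
qed

lemma dc_seq:
  assumes "P 0 (\<lambda>_. 0)"
    and "\<And>n N. P n N \<Longrightarrow> \<exists>d. (\<forall>i. d i \<in> {0,2::nat}) \<and> P (Suc n) (\<lambda>i. 3 * N i + d i)"
  shows "\<exists>N d. N 0 = (\<lambda>_. 0) \<and> (\<forall>n i. d n i \<in> {0,2}) \<and>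
     (\<forall>n. N (Suc n) = (\<lambda>i. 3 * N n i + d n i)) \<and> (\<forall>n. P n (N n))"
proof -
  define D where "D n M = (SOME d. (\<forall>i. d i \<in> {0,2::nat}) \<and> P (Suc n) (\<lambda>i. 3 * M i + d i))" for n M
  define N where "N = rec_nat (\<lambda>_. 0) (\<lambda>n M. \<lambda>i. 3 * M i + D n M i)"
  have N0: "N 0 = (\<lambda>_. 0)" and NS: "N (Suc n) = (\<lambda>i. 3 * N n i + D n (N n) i)" for n
    by (simp_all add: N_def)
  have P: "P n (N n) \<and> (\<forall>i. D n (N n) i \<in> {0,2})" for n
  proof (induction n)
    case 0
    from someI_ex[OF assms(2)[OF assms(1)]] show ?case
      using assms(1) by (simp add: N0 D_def)
  next
    case (Suc n)
    from someI_ex[OF assms(2)[OF Suc[THEN conjunct1]]] have "P (Suc n) (N (Suc n))"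
      by (simp add: NS D_def)
    with someI_ex[OF assms(2)[OF this]] show ?case
      by (simp add: D_def)
  qed
  show ?thesis
    by (rule exI[of _ N], rule exI[of _ "\<lambda>n. D n (N n)"]) (use N0 NS P in auto)
qed


lemma cantor_set_01: "x \<in> cantor_set \<Longrightarrow> 0 \<le> x \<and> x \<le> 1"
proof -
  assume "x \<in> cantor_set"
  then obtain \<alpha> where x: "x = (\<Sum>k. \<alpha> k / 3 ^ (k+1))" and \<alpha>: "\<forall>k. \<alpha> k \<in> {0,2}"
    unfolding cantor_set_def by blast
  from digits_tail[OF \<alpha>, of 0] show ?thesis unfolding x by simp
qed

theorem lemma2p2:
  fixes F :: "real ^ 'm \<Rightarrow> real" and a b :: real
  assumes "a < b"
    and "continuous_on UNIV F"
    and "\<And>(c :: 'm \<Rightarrow> real) (t :: real).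
           t > 0 \<Longrightarrow> (\<forall>i. a \<le> c i \<and> c i + 3 * t \<le> b) \<Longrightarrow>
           (\<forall>i j. {c i..c i + 3 * t} = {c j..c j + 3 * t}
                  \<or> {c i..c i + 3 * t} \<inter> {c j..c j + 3 * t} = {}) \<Longrightarrow>
           F ` {x. \<forall>i. x $ i \<in> {c i..c i + 3 * t}} = F ` {x. \<forall>i. x $ i \<in> ddot (c i) t}"
  shows "F ` {x. \<forall>i. x $ i \<in> cantor_ab a b} = F ` {x. \<forall>i. x $ i \<in> {a..b}}"
proof
  have "cantor_ab a b \<subseteq> {a..b}"
  proof
    fix u assume "u \<in> cantor_ab a b"
    then obtain x where u: "u = a + (b - a) * x" and "x \<in> cantor_set"
      unfolding cantor_ab_def by blast
    then have "0 \<le> x" "x \<le> 1" using cantor_set_01 by auto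
    moreover have "(b - a) * x \<le> (b - a) * 1"
      using \<open>x \<le> 1\<close> \<open>a < b\<close> by (intro mult_left_mono) auto
    moreover have "0 \<le> (b - a) * x" using \<open>0 \<le> x\<close> \<open>a < b\<close> by simp
    ultimately show "u \<in> {a..b}" unfolding u by auto
  qed
  then show "F ` {x. \<forall>i. x $ i \<in> cantor_ab a b} \<subseteq> F ` {x. \<forall>i. x $ i \<in> {a..b}}"
    by blast
next
  show "F ` {x. \<forall>i. x $ i \<in> {a..b}} \<subseteq> F ` {x. \<forall>i. x $ i \<in> cantor_ab a b}"
  proof
    fix y assume y: "y \<in> F ` {x. \<forall>i. x $ i \<in> {a..b}}"
    define tt where "tt n = (b - a) / 3 ^ (n + 1)" for n :: nat
    define cc where "cc n N i = a + (b - a) * real (N i) / 3 ^ n" for n :: nat and N :: "'m \<Rightarrow> nat" and i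
    define box where "box n N = {x. \<forall>i. x $ i \<in> {cc n N i .. cc n N i + 3 * tt n}}" for n N
    define P where "P n N \<longleftrightarrow> (\<forall>i. N i < 3 ^ n) \<and> (\<forall>i j. N i \<noteq> N j \<longrightarrow> N i + 2 \<le> N j \<or> N j + 2 \<le> N i)
        \<and> y \<in> F ` box n N" for n N
    have tt_pos: "tt n > 0" for n using \<open>a < b\<close> by (simp add: tt_def)
    have tt3: "3 * tt n = (b - a) / 3 ^ n" for n by (simp add: tt_def field_simps)
    have P0: "P 0 (\<lambda>_. 0)"
      using y by (simp add: P_def box_def cc_def tt3[of 0, simplified])
    have step: "\<exists>d. (\<forall>i. d i \<in> {0,2::nat}) \<and> P (Suc n) (\<lambda>i. 3 * N i + d i)" if PN: "P n N" for n N
    proof -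
      define c where "c i = cc n N i" for i
      define t where "t = tt n"
      have t0: "t > 0" using tt_pos by (simp add: t_def)
      have Nlt: "N i < 3 ^ n" for i using PN by (simp add: P_def)
      have cdiff: "c j = c i + 3 * t * (real (N j) - real (N i))" for i j
        by (simp add: c_def cc_def t_def tt_def field_simps)
      have bnd: "a \<le> c i \<and> c i + 3 * t \<le> b" for i
      proof
        show "a \<le> c i" using \<open>a < b\<close> by (simp add: c_def cc_def)
        have "real (N i) + 1 \<le> 3 ^ n"
          using Nlt[of i] by (metis Suc_leI of_nat_Suc of_nat_le_iff of_nat_numeral of_nat_power add.commute)
        then have "(real (N i) + 1) / 3 ^ n \<le> 1" by simp
        then have "(b - a) * ((real (N i) + 1) / 3 ^ n) \<le> (b - a) * 1"
          using \<open>a < b\<close> by (intro mult_left_mono) auto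
        moreover have "c i + 3 * t = a + (b - a) * ((real (N i) + 1) / 3 ^ n)"
          by (simp add: c_def cc_def t_def tt_def field_simps)
        ultimately show "c i + 3 * t \<le> b" by simp
      qed
      have disj: "\<forall>i j. {c i..c i + 3 * t} = {c j..c j + 3 * t}
                  \<or> {c i..c i + 3 * t} \<inter> {c j..c j + 3 * t} = {}"
      proof (intro allI)
        fix i j
        show "{c i..c i + 3 * t} = {c j..c j + 3 * t} \<or> {c i..c i + 3 * t} \<inter> {c j..c j + 3 * t} = {}"
        proof (cases "N i = N j")
          case True then show ?thesis using cdiff[of j i] by simp
        next
          case False
          then have "N i + 2 \<le> N j \<or> N j + 2 \<le> N i" using PN by (simp add: P_def)
          then show ?thesis
          proof
            assume "N i + 2 \<le> N j"
            then have "real (N j) - real (N i) \<ge> 2" by linarith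
            then have "3 * t * (real (N j) - real (N i)) \<ge> 3 * t * 2"
              using t0 by (intro mult_left_mono) auto
            then have "c i + 3 * t < c j" using cdiff[of j i] t0 by linarith
            then show ?thesis by auto
          next
            assume "N j + 2 \<le> N i"
            then have "real (N i) - real (N j) \<ge> 2" by linarith
            then have "3 * t * (real (N i) - real (N j)) \<ge> 3 * t * 2"
              using t0 by (intro mult_left_mono) auto
            then have "c j + 3 * t < c i" using cdiff[of i j] t0 by linarith
            then show ?thesis by auto
          qed
        qed
      qed
      have eq: "F ` {x. \<forall>i. x $ i \<in> {c i..c i + 3 * t}} = F ` {x. \<forall>i. x $ i \<in> ddot (c i) t}"
        using assms(3)[OF t0] bnd disj by blast
      have "y \<in> F ` {x. \<forall>i. x $ i \<in> {c i..c i + 3 * t}}"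
        using PN by (simp add: P_def box_def c_def t_def)
      with eq obtain x where x: "\<forall>i. x $ i \<in> ddot (c i) t" and yx: "y = F x" by auto
      define d where "d i = (if x $ i \<le> c i + t then 0 else 2::nat)" for i
      have d02: "\<forall>i. d i \<in> {0,2}" by (simp add: d_def)
      have ccS: "cc (Suc n) (\<lambda>i. 3 * N i + d i) i = c i + real (d i) * t" for i
        by (simp add: c_def cc_def t_def tt_def field_simps)
      have ttS: "3 * tt (Suc n) = t" by (simp add: t_def tt_def field_simps)
      have "x \<in> box (Suc n) (\<lambda>i. 3 * N i + d i)"
        unfolding box_def
      proof (intro CollectI allI)
        fix i
        have "x $ i \<in> {c i..c i + t} \<or> x $ i \<in> {c i + 2 * t..c i + 3 * t}"
          using x unfolding ddot_def by auto
        then show "x $ i \<in> {cc (Suc n) (\<lambda>i. 3 * N i + d i) i..cc (Suc n) (\<lambda>i. 3 * N i + d i) i + 3 * tt (Suc n)}"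
          unfolding ccS ttS using t0 by (auto simp: d_def)
      qed
      then have ybox: "y \<in> F ` box (Suc n) (\<lambda>i. 3 * N i + d i)" using yx by blast
      have "P (Suc n) (\<lambda>i. 3 * N i + d i)"
        unfolding P_def
      proof (intro conjI allI impI ybox)
        fix i
        have "d i \<le> 2" by (simp add: d_def)
        then show "3 * N i + d i < 3 ^ Suc n" using Nlt[of i] by simp
      next
        fix i j assume ne: "3 * N i + d i \<noteq> 3 * N j + d j"
        have "d i \<in> {0,2}" "d j \<in> {0,2}" using d02 by auto
        moreover have "N i \<noteq> N j \<longrightarrow> N i + 2 \<le> N j \<or> N j + 2 \<le> N i" using PN by (simp add: P_def)
        ultimately show "3 * N i + d i + 2 \<le> 3 * N j + d j \<or> 3 * N j + d j + 2 \<le> 3 * N i + d i"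
          using ne by auto
      qed
      with d02 show ?thesis by blast
    qed
    obtain Ns ds where N0: "Ns 0 = (\<lambda>_. 0)" and d02: "\<forall>n i. ds n i \<in> {0,2::nat}"
      and NS: "\<forall>n. Ns (Suc n) = (\<lambda>i. 3 * Ns n i + ds n i)" and PN: "\<forall>n. P n (Ns n)"
      using dc_seq[of P, OF P0 step] by blast
    define \<alpha> where "\<alpha> i k = real (ds k i)" for i k
    have \<alpha>02: "\<forall>k. \<alpha> i k \<in> {0,2}" for i using d02 by (auto simp: \<alpha>_def)
    define z :: "real ^ 'm" where "z = (\<chi> i. a + (b - a) * (\<Sum>k. \<alpha> i k / 3 ^ (k+1)))"
    have partial: "real (Ns n i) / 3 ^ n = (\<Sum>k<n. \<alpha> i k / 3 ^ (k+1))" for n i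
    proof (induction n)
      case 0 then show ?case by (simp add: N0)
    next
      case (Suc n)
      have "real (Ns (Suc n) i) / 3 ^ Suc n = real (Ns n i) / 3 ^ n + \<alpha> i n / 3 ^ (n+1)"
        using NS by (simp add: \<alpha>_def field_simps)
      then show ?case using Suc by simp
    qed
    have zbox: "z \<in> box n (Ns n)" for n
      unfolding box_def
    proof (intro CollectI allI)
      fix i
      have sm: "summable (\<lambda>k. \<alpha> i k / 3 ^ (k+1))"
        using digits_tail(1)[OF \<alpha>02[of i], of 0] by simp
      have split: "(\<Sum>k. \<alpha> i k / 3 ^ (k+1)) = (\<Sum>k. \<alpha> i (k+n) / 3^(k+n+1)) + (\<Sum>k<n. \<alpha> i k / 3 ^ (k+1))"
        using suminf_split_initial_segment[OF sm, of n] by simp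
      define T where "T = (\<Sum>k. \<alpha> i (k+n) / 3^(k+n+1))"
      have T0: "0 \<le> T" and T1: "T \<le> 1 / 3 ^ n"
        using digits_tail(2,3)[OF \<alpha>02[of i], of n] by (simp_all add: T_def)
      have zi: "z $ i = cc n (Ns n) i + (b - a) * T"
      proof -
        have "z $ i = a + (b - a) * (\<Sum>k. \<alpha> i k / 3 ^ (k+1))" by (simp add: z_def)
        also have "\<dots> = a + (b - a) * (T + real (Ns n i) / 3 ^ n)"
          unfolding split partial T_def by simp
        also have "\<dots> = cc n (Ns n) i + (b - a) * T"
          by (simp add: cc_def algebra_simps)
        finally show ?thesis .
      qed
      have "(b - a) * T \<le> (b - a) * (1 / 3 ^ n)"
        using T1 \<open>a < b\<close> by (intro mult_left_mono) auto
      moreover have "0 \<le> (b - a) * T" using T0 \<open>a < b\<close> by simp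
      ultimately show "z $ i \<in> {cc n (Ns n) i..cc n (Ns n) i + 3 * tt n}"
        unfolding zi tt3 by auto
    qed
    have "\<forall>n. \<exists>x. x \<in> box n (Ns n) \<and> F x = y" using PN by (auto simp: P_def)
    then obtain xs where xs: "\<And>n. xs n \<in> box n (Ns n)" and Fxs: "\<And>n. F (xs n) = y" by metis
    have close: "norm (xs n - z) \<le> real CARD('m) * (b - a) * (1/3) ^ n" for n
    proof -
      have ci: "\<bar>(xs n - z) $ i\<bar> \<le> (b - a) * (1/3) ^ n" for i
      proof -
        have "xs n $ i \<in> {cc n (Ns n) i..cc n (Ns n) i + 3 * tt n}"
             "z $ i \<in> {cc n (Ns n) i..cc n (Ns n) i + 3 * tt n}"
          using xs[of n] zbox[of n] by (auto simp: box_def)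
        then have "\<bar>xs n $ i - z $ i\<bar> \<le> 3 * tt n" by auto
        also have "\<dots> = (b - a) * (1/3) ^ n" by (simp add: tt3 power_one_over)
        finally show ?thesis by simp
      qed
      have "norm (xs n - z) \<le> (\<Sum>i\<in>UNIV. \<bar>(xs n - z) $ i\<bar>)" by (rule norm_le_l1_cart)
      also have "\<dots> \<le> (\<Sum>i\<in>(UNIV::'m set). (b - a) * (1/3) ^ n)" by (rule sum_mono) (rule ci)
      also have "\<dots> = real CARD('m) * (b - a) * (1/3) ^ n" by simp
      finally show ?thesis .
    qed
    have "(\<lambda>n. real CARD('m) * (b - a) * (1/3::real) ^ n) \<longlonglongrightarrow> 0"
      by (intro tendsto_mult_right_zero LIMSEQ_power_zero) auto
    then have "(\<lambda>n. xs n - z) \<longlonglongrightarrow> 0"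
      by (rule Lim_null_comparison[rotated]) (use close in auto)
    then have lim: "xs \<longlonglongrightarrow> z" by (rule LIM_zero_cancel)
    have "isCont F z" using assms(2) continuous_on_eq_continuous_at[of UNIV F] by simp
    from isCont_tendsto_compose[OF this lim] have "(\<lambda>n. F (xs n)) \<longlonglongrightarrow> F z" .
    then have "F z = y" using Fxs LIMSEQ_unique[OF _ tendsto_const[of y]] by simp
    moreover have "z \<in> {x. \<forall>i. x $ i \<in> cantor_ab a b}"
    proof (intro CollectI allI)
      fix i
      have "(\<Sum>k. \<alpha> i k / 3 ^ (k+1)) \<in> cantor_set"
        unfolding cantor_set_def using \<alpha>02[of i] by blast
      then show "z $ i \<in> cantor_ab a b"
        unfolding cantor_ab_def z_def by (simp only: vec_lambda_beta) (rule imageI)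
    qed
    ultimately show "y \<in> F ` {x. \<forall>i. x $ i \<in> cantor_ab a b}" by blast
  qed
qed

end
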